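(* Let $R$ and $S$ be finite connected racks, and let $T$ be a finite rack containing an element $t$ with $t\rhd t=t$ (for example, a non-empty quandle). If there exists an isomorphism of racks $R\times T\cong S\times T$, then $R\cong S$.
   Context: A rack is a set $R$ with a binary operation $\rhd$ such that every left multiplication $\ell_a\colon b\mapsto a\rhd b$ is a bijection and $a\rhd(b\rhd c)=(a\rhd b)\rhd(a\rhd c)$ for all $a,b,c$. A quandle is a rack with $a\rhd a=a$ for all $a$. The product $R\times T$ of racks is the cartesian product with componentwise operation. The inner automorphism group $\mathrm{Inn}(R)$ is the subgroup of the symmetric group on $R$ generated by all $\ell_a$; a rack is connected if it is non-empty and $\mathrm{Inn}(R)$ acts transitively on $R$. *)

theory Defs
  imports Main
begin

definition rack :: "'a set \<Rightarrow> ('a \<Rightarrow> 'a \<Rightarrow> 'a) \<Rightarrow> bool" where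
  "rack R op \<longleftrightarrow>
     (\<forall>a\<in>R. \<forall>b\<in>R. op a b \<in> R) \<and>
     (\<forall>a\<in>R. bij_betw (op a) R R) \<and>
     (\<forall>a\<in>R. \<forall>b\<in>R. \<forall>c\<in>R. op a (op b c) = op (op a b) (op a c))"

definition lmult :: "'a set \<Rightarrow> ('a \<Rightarrow> 'a \<Rightarrow> 'a) \<Rightarrow> 'a \<Rightarrow> 'a \<Rightarrow> 'a" where
  "lmult R op a = (\<lambda>b. if b \<in> R then op a b else b)"

text \<open>The inner automorphism group: the subgroup of the symmetric group on
  the carrier generated by all left multiplications (closure of the identity
  under composition with generators and their inverses).\<close>
inductive_set Inn :: "'a set \<Rightarrow> ('a \<Rightarrow> 'a \<Rightarrow> 'a) \<Rightarrow> ('a \<Rightarrow> 'a) set"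
  for R op where
  Inn_id: "id \<in> Inn R op"
| Inn_mult: "\<lbrakk>g \<in> Inn R op; a \<in> R\<rbrakk> \<Longrightarrow> lmult R op a \<circ> g \<in> Inn R op"
| Inn_inv: "\<lbrakk>g \<in> Inn R op; a \<in> R\<rbrakk> \<Longrightarrow> inv (lmult R op a) \<circ> g \<in> Inn R op"

definition connected_rack :: "'a set \<Rightarrow> ('a \<Rightarrow> 'a \<Rightarrow> 'a) \<Rightarrow> bool" where
  "connected_rack R op \<longleftrightarrow> rack R op \<and> R \<noteq> {} \<and>
     (\<forall>x\<in>R. \<forall>y\<in>R. \<exists>g\<in>Inn R op. g x = y)"

definition prod_op :: "('a \<Rightarrow> 'a \<Rightarrow> 'a) \<Rightarrow> ('b \<Rightarrow> 'b \<Rightarrow> 'b)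
    \<Rightarrow> ('a \<times> 'b) \<Rightarrow> ('a \<times> 'b) \<Rightarrow> ('a \<times> 'b)" where
  "prod_op op1 op2 = (\<lambda>(a, b) (c, d). (op1 a c, op2 b d))"

definition rack_iso :: "'a set \<Rightarrow> ('a \<Rightarrow> 'a \<Rightarrow> 'a) \<Rightarrow> 'b set \<Rightarrow> ('b \<Rightarrow> 'b \<Rightarrow> 'b)
    \<Rightarrow> ('a \<Rightarrow> 'b) \<Rightarrow> bool" where
  "rack_iso R op1 S op2 f \<longleftrightarrow> bij_betw f R S \<and>
     (\<forall>a\<in>R. \<forall>b\<in>R. f (op1 a b) = op2 (f a) (f b))"

end

theory Submission
  imports Defs "HOL-Library.FuncSet"
begin

definition hm :: "'x set \<Rightarrow> ('x\<Rightarrow>'x\<Rightarrow>'x) \<Rightarrow> 'y set \<Rightarrow> ('y\<Rightarrow>'y\<Rightarrow>'y) \<Rightarrow> ('x\<Rightarrow>'y) set" where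
  "hm X opX A opA = {\<phi> \<in> X \<rightarrow>\<^sub>E A. \<forall>a\<in>X. \<forall>b\<in>X. \<phi> (opX a b) = opA (\<phi> a) (\<phi> b)}"

definition kern :: "'x set \<Rightarrow> ('x \<Rightarrow> 'y) \<Rightarrow> ('x \<times> 'x) set" where
  "kern X \<phi> = {(a,b) \<in> X \<times> X. \<phi> a = \<phi> b}"

definition hge where
  "hge X opX A opA \<theta> = {\<phi> \<in> hm X opX A opA. \<theta> \<subseteq> kern X \<phi>}"

definition heq where
  "heq X opX A opA \<theta> = {\<phi> \<in> hm X opX A opA. kern X \<phi> = \<theta>}"

lemma finite_hm: "finite X \<Longrightarrow> finite A \<Longrightarrow> finite (hm X opX A opA)"
  unfolding hm_def by (rule finite_subset[OF _ finite_PiE[of X "\<lambda>_. A"]]) auto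

lemma hge_sum:
  assumes "finite X" "finite A" "\<theta> \<subseteq> X \<times> X"
  shows "card (hge X opX A opA \<theta>) =
    (\<Sum>\<theta>'\<in>{\<theta>'. \<theta> \<subseteq> \<theta>' \<and> \<theta>' \<subseteq> X \<times> X}. card (heq X opX A opA \<theta>'))"
proof -
  have fin: "finite {\<theta>'. \<theta> \<subseteq> \<theta>' \<and> \<theta>' \<subseteq> X \<times> X}"
    by (rule finite_subset[of _ "Pow (X \<times> X)"]) (use assms in auto)
  have eq: "hge X opX A opA \<theta> = (\<Union>\<theta>'\<in>{\<theta>'. \<theta> \<subseteq> \<theta>' \<and> \<theta>' \<subseteq> X \<times> X}. heq X opX A opA \<theta>')"
    unfolding hge_def heq_def kern_def by auto
  show ?thesis unfolding eq
    by (rule card_UN_disjoint[OF fin]) 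
       (auto simp: heq_def intro: finite_subset[OF _ finite_hm[OF assms(1,2)]])
qed

lemma prod_op_simps[simp]:
  "fst (prod_op o1 o2 p q) = o1 (fst p) (fst q)"
  "snd (prod_op o1 o2 p q) = o2 (snd p) (snd q)"
  by (auto simp: prod_op_def split: prod.splits)

lemma card_hge_prod:
  assumes cl: "\<forall>a\<in>X. \<forall>b\<in>X. opX a b \<in> X"
  shows "card (hge X opX (A \<times> B) (prod_op opA opB) \<theta>) =
     card (hge X opX A opA \<theta>) * card (hge X opX B opB \<theta>)"
proof -
  have "bij_betw (\<lambda>\<phi>. (restrict (fst \<circ> \<phi>) X, restrict (snd \<circ> \<phi>) X))
     (hge X opX (A \<times> B) (prod_op opA opB) \<theta>) (hge X opX A opA \<theta> \<times> hge X opX B opB \<theta>)"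
  proof (rule bij_betw_byWitness[where f'="\<lambda>(\<phi>1,\<phi>2). restrict (\<lambda>x. (\<phi>1 x, \<phi>2 x)) X"])
    show "\<forall>a\<in>hge X opX (A \<times> B) (prod_op opA opB) \<theta>.
       (case (restrict (fst \<circ> a) X, restrict (snd \<circ> a) X) of (\<phi>1, \<phi>2) \<Rightarrow> restrict (\<lambda>x. (\<phi>1 x, \<phi>2 x)) X) = a"
      proof
        fix \<phi> assume "\<phi> \<in> hge X opX (A \<times> B) (prod_op opA opB) \<theta>"
        then have e: "\<phi> \<in> extensional X" by (auto simp: hge_def hm_def PiE_def)
        show "(case (restrict (fst \<circ> \<phi>) X, restrict (snd \<circ> \<phi>) X) of (\<phi>1, \<phi>2) \<Rightarrow> restrict (\<lambda>x. (\<phi>1 x, \<phi>2 x)) X) = \<phi>"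
        proof (rule ext)
          fix x show "(case (restrict (fst \<circ> \<phi>) X, restrict (snd \<circ> \<phi>) X) of (\<phi>1, \<phi>2) \<Rightarrow> restrict (\<lambda>x. (\<phi>1 x, \<phi>2 x)) X) x = \<phi> x"
            using e by (cases "x \<in> X") (auto simp: extensional_def)
        qed
      qed
    show "\<forall>a'\<in>hge X opX A opA \<theta> \<times> hge X opX B opB \<theta>.
       (\<lambda>\<phi>. (restrict (fst \<circ> \<phi>) X, restrict (snd \<circ> \<phi>) X))
        (case a' of (\<phi>1, \<phi>2) \<Rightarrow> restrict (\<lambda>x. (\<phi>1 x, \<phi>2 x)) X) = a'"
      proof
        fix q assume "q \<in> hge X opX A opA \<theta> \<times> hge X opX B opB \<theta>"
        then obtain \<phi>1 \<phi>2 where q: "q = (\<phi>1, \<phi>2)" and e: "\<phi>1 \<in> extensional X" "\<phi>2 \<in> extensional X"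
          by (auto simp: hge_def hm_def PiE_def)
        have "restrict (fst \<circ> restrict (\<lambda>x. (\<phi>1 x, \<phi>2 x)) X) X = \<phi>1"
          using e(1) by (intro ext) (auto simp: extensional_def)
        moreover have "restrict (snd \<circ> restrict (\<lambda>x. (\<phi>1 x, \<phi>2 x)) X) X = \<phi>2"
          using e(2) by (intro ext) (auto simp: extensional_def)
        ultimately show "(\<lambda>\<phi>. (restrict (fst \<circ> \<phi>) X, restrict (snd \<circ> \<phi>) X))
          (case q of (\<phi>1, \<phi>2) \<Rightarrow> restrict (\<lambda>x. (\<phi>1 x, \<phi>2 x)) X) = q" using q by simp
      qed
    show "(\<lambda>\<phi>. (restrict (fst \<circ> \<phi>) X, restrict (snd \<circ> \<phi>) X)) `
       hge X opX (A \<times> B) (prod_op opA opB) \<theta> \<subseteq> hge X opX A opA \<theta> \<times> hge X opX B opB \<theta>"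
    proof (rule subsetI, elim imageE)
      fix p \<phi> assume p: "p = (restrict (fst \<circ> \<phi>) X, restrict (snd \<circ> \<phi>) X)"
        and \<phi>: "\<phi> \<in> hge X opX (A \<times> B) (prod_op opA opB) \<theta>"
      have pi: "\<phi> \<in> X \<rightarrow>\<^sub>E A \<times> B" and hom: "\<forall>a\<in>X. \<forall>b\<in>X. \<phi> (opX a b) = prod_op opA opB (\<phi> a) (\<phi> b)"
        and th: "\<theta> \<subseteq> kern X \<phi>" using \<phi> by (auto simp: hge_def hm_def)
      have pix: "\<forall>x\<in>X. fst (\<phi> x) \<in> A \<and> snd (\<phi> x) \<in> B" using pi by (metis PiE_mem mem_Times_iff)
      have "restrict (fst \<circ> \<phi>) X \<in> hge X opX A opA \<theta>"
        unfolding hge_def hm_def using pix hom th cl by (auto simp: kern_def)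
      moreover have "restrict (snd \<circ> \<phi>) X \<in> hge X opX B opB \<theta>"
        unfolding hge_def hm_def using pix hom th cl by (auto simp: kern_def)
      ultimately show "p \<in> hge X opX A opA \<theta> \<times> hge X opX B opB \<theta>" using p by simp
    qed
    show "(\<lambda>(\<phi>1, \<phi>2). restrict (\<lambda>x. (\<phi>1 x, \<phi>2 x)) X) ` (hge X opX A opA \<theta> \<times> hge X opX B opB \<theta>)
       \<subseteq> hge X opX (A \<times> B) (prod_op opA opB) \<theta>"
    proof (rule subsetI, elim imageE)
      fix p q assume p: "p = (case q of (\<phi>1, \<phi>2) \<Rightarrow> restrict (\<lambda>x. (\<phi>1 x, \<phi>2 x)) X)"
        and q: "q \<in> hge X opX A opA \<theta> \<times> hge X opX B opB \<theta>"
      obtain \<phi>1 \<phi>2 where q': "q = (\<phi>1, \<phi>2)" by (cases q)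
      have pi: "\<phi>1 \<in> X \<rightarrow>\<^sub>E A" "\<phi>2 \<in> X \<rightarrow>\<^sub>E B"
        and hom: "\<forall>a\<in>X. \<forall>b\<in>X. \<phi>1 (opX a b) = opA (\<phi>1 a) (\<phi>1 b)"
           "\<forall>a\<in>X. \<forall>b\<in>X. \<phi>2 (opX a b) = opB (\<phi>2 a) (\<phi>2 b)"
        and th: "\<theta> \<subseteq> kern X \<phi>1" "\<theta> \<subseteq> kern X \<phi>2" using q q' by (auto simp: hge_def hm_def)
      have "restrict (\<lambda>x. (\<phi>1 x, \<phi>2 x)) X \<in> X \<rightarrow>\<^sub>E A \<times> B" using pi by auto
      moreover have "\<forall>a\<in>X. \<forall>b\<in>X. restrict (\<lambda>x. (\<phi>1 x, \<phi>2 x)) X (opX a b)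
          = prod_op opA opB (restrict (\<lambda>x. (\<phi>1 x, \<phi>2 x)) X a) (restrict (\<lambda>x. (\<phi>1 x, \<phi>2 x)) X b)"
        using hom cl by (simp add: prod_op_def)
      moreover have "\<theta> \<subseteq> kern X (restrict (\<lambda>x. (\<phi>1 x, \<phi>2 x)) X)"
        using th by (auto simp: kern_def)
      ultimately show "p \<in> hge X opX (A \<times> B) (prod_op opA opB) \<theta>"
        using p q' by (simp add: hge_def hm_def)
    qed
  qed
  then show ?thesis by (simp add: bij_betw_same_card card_cartesian_product)
qed

lemma card_hge_iso_le:
  assumes cl: "\<forall>a\<in>X. \<forall>b\<in>X. opX a b \<in> X"
    and iso: "rack_iso A opA B opB f" and fin: "finite X" "finite B"
  shows "card (hge X opX A opA \<theta>) \<le> card (hge X opX B opB \<theta>)"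
proof (rule card_inj_on_le[where f="\<lambda>\<phi>. restrict (f \<circ> \<phi>) X"])
  have inj: "inj_on f A" and fA: "f ` A = B" using iso by (auto simp: rack_iso_def bij_betw_def)
  show "inj_on (\<lambda>\<phi>. restrict (f \<circ> \<phi>) X) (hge X opX A opA \<theta>)"
  proof
    fix \<phi> \<psi> assume "\<phi> \<in> hge X opX A opA \<theta>" "\<psi> \<in> hge X opX A opA \<theta>"
      "restrict (f \<circ> \<phi>) X = restrict (f \<circ> \<psi>) X"
    then show "\<phi> = \<psi>"
    proof (intro ext)
      fix x
      have p: "\<phi> \<in> X \<rightarrow>\<^sub>E A" "\<psi> \<in> X \<rightarrow>\<^sub>E A" using \<open>\<phi> \<in> hge X opX A opA \<theta>\<close> \<open>\<psi> \<in> hge X opX A opA \<theta>\<close>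
        by (auto simp: hge_def hm_def)
      show "\<phi> x = \<psi> x"
      proof (cases "x \<in> X")
        case True
        then have "f (\<phi> x) = f (\<psi> x)" using fun_cong[OF \<open>restrict (f \<circ> \<phi>) X = restrict (f \<circ> \<psi>) X\<close>, of x] by simp
        moreover have "\<phi> x \<in> A" "\<psi> x \<in> A" using p True by auto
        ultimately show ?thesis using inj by (auto simp: inj_on_def)
      next
        case False then show ?thesis using p by (auto simp: PiE_def extensional_def)
      qed
    qed
  qed
  show "(\<lambda>\<phi>. restrict (f \<circ> \<phi>) X) ` hge X opX A opA \<theta> \<subseteq> hge X opX B opB \<theta>"
  proof
    fix g assume "g \<in> (\<lambda>\<phi>. restrict (f \<circ> \<phi>) X) ` hge X opX A opA \<theta>"
    then obtain \<phi> where \<phi>: "\<phi> \<in> hge X opX A opA \<theta>" and g: "g = restrict (f \<circ> \<phi>) X" by auto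
    have pi: "\<phi> \<in> X \<rightarrow>\<^sub>E A" and hom: "\<forall>a\<in>X. \<forall>b\<in>X. \<phi> (opX a b) = opA (\<phi> a) (\<phi> b)"
      and th: "\<theta> \<subseteq> kern X \<phi>" using \<phi> by (auto simp: hge_def hm_def)
    have "g \<in> X \<rightarrow>\<^sub>E B" using pi fA g by auto
    moreover have "\<forall>a\<in>X. \<forall>b\<in>X. g (opX a b) = opB (g a) (g b)"
    proof (intro ballI)
      fix a b assume a: "a \<in> X" and b: "b \<in> X"
      have "\<phi> a \<in> A" "\<phi> b \<in> A" using pi a b by auto
      then show "g (opX a b) = opB (g a) (g b)"
        using cl hom iso g a b by (simp add: rack_iso_def)
    qed
    moreover have "\<theta> \<subseteq> kern X g" using th g by (auto simp: kern_def)
    ultimately show "g \<in> hge X opX B opB \<theta>" by (simp add: hge_def hm_def)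
  qed
  show "finite (hge X opX B opB \<theta>)"
    by (rule finite_subset[OF _ finite_hm[OF fin]]) (auto simp: hge_def)
qed

lemma rack_iso_inv:
  assumes iso: "rack_iso A opA B opB f" and cl: "\<forall>a\<in>A. \<forall>b\<in>A. opA a b \<in> A"
  shows "rack_iso B opB A opA (inv_into A f)"
proof -
  have bij: "bij_betw f A B" and hom: "\<forall>a\<in>A. \<forall>b\<in>A. f (opA a b) = opB (f a) (f b)"
    using iso by (auto simp: rack_iso_def)
  have "\<forall>a\<in>B. \<forall>b\<in>B. inv_into A f (opB a b) = opA (inv_into A f a) (inv_into A f b)"
  proof (intro ballI)
    fix a b assume a: "a \<in> B" and b: "b \<in> B"
    let ?a = "inv_into A f a" and ?b = "inv_into A f b"
    have "?a \<in> A" "?b \<in> A" "f ?a = a" "f ?b = b" using a b bij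
      by (auto simp: bij_betw_def inv_into_into f_inv_into_f)
    then have "opB a b = f (opA ?a ?b)" using hom by auto
    then show "inv_into A f (opB a b) = opA ?a ?b"
      using bij cl \<open>?a \<in> A\<close> \<open>?b \<in> A\<close> by (simp add: bij_betw_def)
  qed
  then show ?thesis using bij_betw_inv_into[OF bij] by (simp add: rack_iso_def)
qed

lemma heq_eq:
  assumes H: "\<forall>\<theta>. \<theta> \<subseteq> X \<times> X \<longrightarrow> card (hge X opX A opA \<theta>) = card (hge X opX B opB \<theta>)"
    and fin: "finite X" "finite A" "finite B"
  shows "\<theta> \<subseteq> X \<times> X \<Longrightarrow> card (heq X opX A opA \<theta>) = card (heq X opX B opB \<theta>)"
proof (induction "card (X \<times> X - \<theta>)" arbitrary: \<theta> rule: less_induct)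
  case less
  let ?I = "{\<theta>'. \<theta> \<subseteq> \<theta>' \<and> \<theta>' \<subseteq> X \<times> X}"
  have finI: "finite ?I"
    by (rule finite_subset[of _ "Pow (X \<times> X)"]) (use fin in auto)
  have th: "\<theta> \<in> ?I" using less by auto
  have s: "(\<Sum>\<theta>'\<in>?I - {\<theta>}. card (heq X opX A opA \<theta>')) = (\<Sum>\<theta>'\<in>?I - {\<theta>}. card (heq X opX B opB \<theta>'))"
  proof (rule sum.cong[OF refl])
    fix \<theta>' assume t': "\<theta>' \<in> ?I - {\<theta>}"
    have "X \<times> X - \<theta>' \<subset> X \<times> X - \<theta>" using t' less(2) by auto
    then have "card (X \<times> X - \<theta>') < card (X \<times> X - \<theta>)"
      by (rule psubset_card_mono[rotated]) (use fin in auto)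
    then show "card (heq X opX A opA \<theta>') = card (heq X opX B opB \<theta>')"
      using less(1) t' by auto
  qed
  have "card (hge X opX A opA \<theta>) = card (heq X opX A opA \<theta>) + (\<Sum>\<theta>'\<in>?I - {\<theta>}. card (heq X opX A opA \<theta>'))"
    using hge_sum[OF fin(1,2) less(2)] sum.remove[OF finI th] by simp
  moreover have "card (hge X opX B opB \<theta>) = card (heq X opX B opB \<theta>) + (\<Sum>\<theta>'\<in>?I - {\<theta>}. card (heq X opX B opB \<theta>'))"
    using hge_sum[OF fin(1,3) less(2)] sum.remove[OF finI th] by simp
  ultimately show ?case using H less(2) s by auto
qed

theorem theorem7p1:
  fixes R :: "'a set" and opR :: "'a \<Rightarrow> 'a \<Rightarrow> 'a"
    and S :: "'b set" and opS :: "'b \<Rightarrow> 'b \<Rightarrow> 'b"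
    and T :: "'c set" and opT :: "'c \<Rightarrow> 'c \<Rightarrow> 'c"
  assumes "finite R" and "connected_rack R opR"
    and "finite S" and "connected_rack S opS"
    and "finite T" and "rack T opT"
    and "t \<in> T" and "opT t t = t"
    and "\<exists>f. rack_iso (R \<times> T) (prod_op opR opT) (S \<times> T) (prod_op opS opT) f"
  shows "\<exists>g. rack_iso R opR S opS g"
proof -
  obtain f where f: "rack_iso (R \<times> T) (prod_op opR opT) (S \<times> T) (prod_op opS opT) f"
    using assms(9) by blast
  have clR: "\<forall>a\<in>R. \<forall>b\<in>R. opR a b \<in> R" using assms(2) by (simp add: connected_rack_def rack_def)
  have clS: "\<forall>a\<in>S. \<forall>b\<in>S. opS a b \<in> S" using assms(4) by (simp add: connected_rack_def rack_def)
  have clT: "\<forall>a\<in>T. \<forall>b\<in>T. opT a b \<in> T" using assms(6) by (simp add: rack_def)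
  have clRT: "\<forall>a\<in>R \<times> T. \<forall>b\<in>R \<times> T. prod_op opR opT a b \<in> R \<times> T"
    using clR clT by (auto simp: prod_op_def)
  have finRT: "finite (R \<times> T)" "finite (S \<times> T)" using assms(1,3,5) by auto
  have f': "rack_iso (S \<times> T) (prod_op opS opT) (R \<times> T) (prod_op opR opT) (inv_into (R \<times> T) f)"
    by (rule rack_iso_inv[OF f clRT])
  have H: "\<forall>\<theta>. \<theta> \<subseteq> R \<times> R \<longrightarrow> card (hge R opR R opR \<theta>) = card (hge R opR S opS \<theta>)"
  proof (intro allI impI)
    fix \<theta> assume th: "\<theta> \<subseteq> R \<times> R"
    have "card (hge R opR (R \<times> T) (prod_op opR opT) \<theta>) = card (hge R opR (S \<times> T) (prod_op opS opT) \<theta>)"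
      using card_hge_iso_le[OF clR f assms(1) finRT(2)] card_hge_iso_le[OF clR f' assms(1) finRT(1)]
      by (rule antisym)
    then have e: "card (hge R opR R opR \<theta>) * card (hge R opR T opT \<theta>) =
        card (hge R opR S opS \<theta>) * card (hge R opR T opT \<theta>)"
      using card_hge_prod[OF clR] by metis
    have "restrict (\<lambda>_. t) R \<in> hge R opR T opT \<theta>"
      using th clR assms(7,8) by (auto simp: hge_def hm_def kern_def)
    moreover have "finite (hge R opR T opT \<theta>)"
      by (rule finite_subset[OF _ finite_hm[OF assms(1,5)]]) (auto simp: hge_def)
    ultimately have "card (hge R opR T opT \<theta>) > 0" by (auto simp: card_gt_0_iff)
    then show "card (hge R opR R opR \<theta>) = card (hge R opR S opS \<theta>)" using e by simp
  qed
  let ?D = "{(a, b) \<in> R \<times> R. a = b}"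
  have D: "card (heq R opR R opR ?D) = card (heq R opR S opS ?D)"
    by (rule heq_eq[OF H assms(1,1,3)]) auto
  have "restrict id R \<in> heq R opR R opR ?D"
    using clR by (auto simp: heq_def hm_def kern_def)
  moreover have "finite (heq R opR R opR ?D)"
    by (rule finite_subset[OF _ finite_hm[OF assms(1,1)]]) (auto simp: heq_def)
  moreover have "finite (heq R opR S opS ?D)"
    by (rule finite_subset[OF _ finite_hm[OF assms(1,3)]]) (auto simp: heq_def)
  ultimately have "card (heq R opR S opS ?D) > 0" using D by (auto simp: card_gt_0_iff)
  then obtain g where g: "g \<in> heq R opR S opS ?D" by (auto simp: card_gt_0_iff)
  have inj: "inj_on g R" using g unfolding heq_def kern_def inj_on_def by blast
  have gS: "g ` R \<subseteq> S" and hom: "\<forall>a\<in>R. \<forall>b\<in>R. g (opR a b) = opS (g a) (g b)"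
    using g by (auto simp: heq_def hm_def)
  have "card (R \<times> T) = card (S \<times> T)"
    using f by (auto simp: rack_iso_def bij_betw_same_card)
  moreover have "card T > 0" using assms(5,7) by (auto simp: card_gt_0_iff)
  ultimately have "card R = card S" by (simp add: card_cartesian_product)
  then have "card (g ` R) = card S" using card_image[OF inj] by simp
  then have "g ` R = S" using card_subset_eq[OF assms(3) gS] by simp
  then have "bij_betw g R S" using inj by (simp add: bij_betw_def)
  then show ?thesis using hom by (auto simp: rack_iso_def)
qed

end
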